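(* (Consistent estimation of $p^K$.) In the random Kronecker graph model described in the context, let $\hat p:=\frac{1}{n^2}\sum_{i,j=1}^N\sum_{\alpha,\beta=1}^L\mathcal A_{i\alpha j\beta}$. Then $\hat p-p^K\to 0$ almost surely as $K\to\infty$.
   Context: Notation. Fix integers $m,\ell\ge 1$. For $K\ge1$ put $N=m^K$, $L=\ell^K$, $n=NL=(m\ell)^K$. For a fourth-order tensor $\mathcal T\in\mathbb R^{N\times L\times N\times L}$ (indices $i,j\in\{1,\dots,N\}$, $\alpha,\beta\in\{1,\dots,L\}$), $\mathrm{mat}(\mathcal T)\in\mathbb R^{n\times n}$ is the matrix with entries $\mathrm{mat}(\mathcal T)_{i+(\alpha-1)N,\,j+(\beta-1)N}=\mathcal T_{i\alpha j\beta}$; $\|\mathcal T\|_{\max}=\max_{i,\alpha,j,\beta}|\mathcal T_{i\alpha j\beta}|$. The Einstein product is $(\mathcal A*_2\mathcal B)_{i\alpha j\beta}=\sum_{k,\gamma}\mathcal A_{i\alpha k\gamma}\mathcal B_{k\gamma j\beta}$. A permutation tensor is a tensor $\pi$ such that $\mathrm{mat}(\pi)$ is a permutation matrix; $\pi^{-1}$ is the tensor with $\mathrm{mat}(\pi^{-1})=\mathrm{mat}(\pi)^{-1}$. The Kronecker product of $\mathcal A\in\mathbb R^{I_1\times I_2\times I_3\times I_4}$ and $\mathcal B\in\mathbb R^{J_1\times J_2\times J_3\times J_4}$ is $\mathcal A\otimes\mathcal B\in\mathbb R^{I_1J_1\times I_2J_2\times I_3J_3\times I_4J_4}$ with $(\mathcal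 A\otimes\mathcal B)_{(i_1-1)J_1+j_1,\dots,(i_4-1)J_4+j_4}=\mathcal A_{i_1i_2i_3i_4}\mathcal B_{j_1j_2j_3j_4}$; $\mathcal P^{\otimes K}$ is the $K$-fold Kronecker power. $\mathcal J_k$ is the all-ones tensor in $\mathbb R^{m^k\times\ell^k\times m^k\times\ell^k}$. Random Kronecker graph model. Let $p=p_K\in(0,1)$ and $\mathcal X=\mathcal X_K\in\mathbb R^{m\times\ell\times m\times\ell}$ with $\sup_K\|\mathcal X_K\|_{\max}<\infty$, such that the initiator $\mathcal P_1:=p\,\mathcal J_1+\mathcal X/\sqrt n$ has entries in $[0,1]$; let $\mathcal P_K:=\mathcal P_1^{\otimes K}\in\mathbb R^{N\times L\times N\times L}$. Let $\mathcal B$ have independent entries $\mathcal B_{i\alpha j\beta}\sim\mathrm{Bernoulli}([\mathcal P_K]_{i\alpha j\beta})$, let $\mathcal Z:=\mathcal B-\mathcal P_K$, let $\pi$ be a deterministic permutation tensor, and let the adjacency tensor be $\mathcal A:=\pi*_2(\mathcal P_K+\mathcal Z)*_2\pi^{-1}$ (all random objects for different $K$ defined on a common probability space). Asymptotic statements refer to $K\to\infty$ (hence $n\to\infty$) with $m,\ell$ fixed and $p^K\to q\in(0,1)$. *)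

theory Defs
  imports "HOL-Probability.Probability"
begin

text \<open>Fourth-order real tensors, indexed 0-based: entry (i, alpha, j, beta) with
  i, j < N and alpha, beta < L. Entries outside the index range are irrelevant.\<close>
type_synonym tensor4 = "nat \<Rightarrow> nat \<Rightarrow> nat \<Rightarrow> nat \<Rightarrow> real"

definition ones4 :: tensor4 where "ones4 = (\<lambda>i a j b. 1)"

definition id4 :: tensor4 where
  "id4 = (\<lambda>i a j b. if i = j \<and> a = b then 1 else 0)"

definition einstein :: "nat \<Rightarrow> nat \<Rightarrow> tensor4 \<Rightarrow> tensor4 \<Rightarrow> tensor4" where
  "einstein N L A B = (\<lambda>i a j b. \<Sum>k<N. \<Sum>g<L. A i a k g * B k g j b)"

text \<open>mat(T) as an n x n matrix, n = N*L, 0-based: row i + a*N, column j + b*N.\<close>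
definition mat4 :: "nat \<Rightarrow> nat \<Rightarrow> tensor4 \<Rightarrow> nat \<Rightarrow> nat \<Rightarrow> real" where
  "mat4 N L T = (\<lambda>r c. T (r mod N) (r div N) (c mod N) (c div N))"

definition is_perm_matrix :: "nat \<Rightarrow> (nat \<Rightarrow> nat \<Rightarrow> real) \<Rightarrow> bool" where
  "is_perm_matrix n M \<longleftrightarrow>
     (\<forall>r<n. \<forall>c<n. M r c = 0 \<or> M r c = 1) \<and>
     (\<forall>r<n. \<exists>!c. c < n \<and> M r c = 1) \<and>
     (\<forall>c<n. \<exists>!r. r < n \<and> M r c = 1)"

definition is_perm_tensor :: "nat \<Rightarrow> nat \<Rightarrow> tensor4 \<Rightarrow> bool" where
  "is_perm_tensor N L T \<longleftrightarrow> is_perm_matrix (N * L) (mat4 N L T)"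

text \<open>Kronecker product of A (any size) with B of size J1 x J2 x J3 x J4 (0-based indexing:
  index (i1*J1 + j1) corresponds to (i1, j1)).\<close>
definition kron4 :: "nat \<Rightarrow> nat \<Rightarrow> tensor4 \<Rightarrow> tensor4 \<Rightarrow> tensor4" where
  "kron4 J1 J2 A B = (\<lambda>x1 x2 x3 x4.
      A (x1 div J1) (x2 div J2) (x3 div J1) (x4 div J2) *
      B (x1 mod J1) (x2 mod J2) (x3 mod J1) (x4 mod J2))"

text \<open>K-fold Kronecker power of an m x l x m x l tensor (the 0-fold power is the
  1x1x1x1 tensor with entry 1, the unit of the Kronecker product).\<close>
fun kron_pow :: "nat \<Rightarrow> nat \<Rightarrow> tensor4 \<Rightarrow> nat \<Rightarrow> tensor4" where
  "kron_pow m l P 0 = ones4"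
| "kron_pow m l P (Suc K) = kron4 m l (kron_pow m l P K) P"

definition tsum4 :: "nat \<Rightarrow> nat \<Rightarrow> tensor4 \<Rightarrow> real" where
  "tsum4 N L T = (\<Sum>i<N. \<Sum>a<L. \<Sum>j<N. \<Sum>b<L. T i a j b)"

end

theory Submission
  imports Defs
begin


lemma reidx:
  fixes f :: "nat \<Rightarrow> nat \<Rightarrow> real"
  assumes "N > 0"
  shows "(\<Sum>i<N. \<Sum>a<L. f i a) = (\<Sum>r<N*L. f (r mod N) (r div N))"
proof -
  have b: "bij_betw (\<lambda>r. (r mod N, r div N)) {..<N*L} ({..<N}\<times>{..<L})"
  proof (rule bij_betwI[where g="\<lambda>(i,a). i + a*N"])
    show "(\<lambda>r. (r mod N, r div N)) \<in> {..<N*L} \<rightarrow> {..<N}\<times>{..<L}"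
      using assms by (auto simp: less_mult_imp_div_less mult.commute)
    show "(\<lambda>(i,a). i + a*N) \<in> {..<N}\<times>{..<L} \<rightarrow> {..<N*L}"
    proof
      fix x assume "x \<in> {..<N}\<times>{..<L}"
      then obtain i a where x: "x = (i,a)" "i < N" "a < L" by auto
      have "i + a*N < N + a*N" using x by simp
      also have "\<dots> = (Suc a)*N" by simp
      also have "\<dots> \<le> L*N" using x by (intro mult_right_mono) auto
      finally show "(\<lambda>(i,a). i + a*N) x \<in> {..<N*L}" using x by (simp add: mult.commute)
    qed
    show "\<And>x. x \<in> {..<N * L} \<Longrightarrow> (case (x mod N, x div N) of (i, a) \<Rightarrow> i + a * N) = x"
      by simp
    show "\<And>y. y \<in> {..<N} \<times> {..<L} \<Longrightarrow> ((case y of (i, a) \<Rightarrow> i + a * N) mod N, (case y of (i, a) \<Rightarrow> i + a * N) div N) = y"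
      by auto
  qed
  have "(\<Sum>i<N. \<Sum>a<L. f i a) = (\<Sum>(i,a)\<in>{..<N}\<times>{..<L}. f i a)"
    by (simp add: sum.cartesian_product)
  also have "\<dots> = (\<Sum>r<N*L. f (r mod N) (r div N))"
    using sum.reindex_bij_betw[OF b, of "\<lambda>(i,a). f i a"] by simp
  finally show ?thesis .
qed

lemma tsum4_mat:
  assumes "N > 0"
  shows "tsum4 N L T = (\<Sum>r<N*L. \<Sum>c<N*L. mat4 N L T r c)"
proof -
  have "tsum4 N L T = (\<Sum>i<N. \<Sum>a<L. (\<Sum>c<N*L. T i a (c mod N) (c div N)))"
    unfolding tsum4_def by (simp add: reidx[OF assms])
  also have "\<dots> = (\<Sum>r<N*L. \<Sum>c<N*L. mat4 N L T r c)"
    by (subst reidx[OF assms]) (simp add: mat4_def)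
  finally show ?thesis .
qed

lemma einstein_mat:
  assumes "N > 0"
  shows "mat4 N L (einstein N L A B) r c = (\<Sum>s<N*L. mat4 N L A r s * mat4 N L B s c)"
  unfolding mat4_def einstein_def by (subst reidx[OF assms]) simp

lemma perm_colsum:
  assumes "is_perm_matrix n P" "t < n"
  shows "(\<Sum>r<n. P r t) = 1"
proof -
  from assms obtain r0 where r0: "r0 < n" "P r0 t = 1" "\<And>r. r < n \<Longrightarrow> P r t = 1 \<Longrightarrow> r = r0"
    unfolding is_perm_matrix_def by metis
  have "(\<Sum>r<n. P r t) = (\<Sum>r<n. if r = r0 then 1 else 0)"
  proof (rule sum.cong)
    fix r assume r: "r \<in> {..<n}"
    have "P r t = 0 \<or> P r t = 1" using assms r unfolding is_perm_matrix_def by auto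
    show "P r t = (if r = r0 then 1 else 0)"
    proof (cases "r = r0")
      case True then show ?thesis using r0(2) by simp
    next
      case False then have "P r t \<noteq> 1" using r0(3) r by blast
      then show ?thesis using \<open>P r t = 0 \<or> P r t = 1\<close> False by simp
    qed
  qed simp
  also have "\<dots> = 1" using r0(1) by simp
  finally show ?thesis .
qed

lemma perm_orth:
  assumes "is_perm_matrix n P" "s < n" "t < n"
  shows "(\<Sum>r<n. P r t * P r s) = (if s = t then 1 else 0)"
proof -
  have "(\<Sum>r<n. P r t * P r s) = (\<Sum>r<n. if s = t then P r t else 0)"
  proof (rule sum.cong)
    fix r assume r: "r \<in> {..<n}"
    have 1: "P r t = 0 \<or> P r t = 1" "P r s = 0 \<or> P r s = 1" using assms r unfolding is_perm_matrix_def by auto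
    have 2: "\<exists>!c. c < n \<and> P r c = 1" using assms r unfolding is_perm_matrix_def by auto
    show "P r t * P r s = (if s = t then P r t else 0)"
      using 1 2 assms by (cases "s = t") auto
  qed simp
  then show ?thesis using perm_colsum[OF assms(1,3)] by simp
qed

lemma perm_inv_transpose:
  assumes "is_perm_matrix n P"
    and "\<And>r c. r < n \<Longrightarrow> c < n \<Longrightarrow> (\<Sum>s<n. P r s * Q s c) = (if r = c then 1 else 0)"
    and "t < n" "c < n"
  shows "Q t c = P c t"
proof -
  have "(\<Sum>r<n. P r t * (\<Sum>s<n. P r s * Q s c)) = (\<Sum>r<n. P r t * (if r = c then 1 else 0))"
    using assms(2,4) by (intro sum.cong) auto
  also have "\<dots> = P c t" using assms(4) by (simp add: if_distrib cong: if_cong)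
  finally have 1: "(\<Sum>r<n. P r t * (\<Sum>s<n. P r s * Q s c)) = P c t" .
  have "(\<Sum>r<n. P r t * (\<Sum>s<n. P r s * Q s c)) = (\<Sum>s<n. (\<Sum>r<n. P r t * P r s) * Q s c)"
  proof -
    have "(\<Sum>r<n. P r t * (\<Sum>s<n. P r s * Q s c)) = (\<Sum>r<n. \<Sum>s<n. P r t * P r s * Q s c)"
      by (simp add: sum_distrib_left mult.assoc)
    also have "\<dots> = (\<Sum>s<n. \<Sum>r<n. P r t * P r s * Q s c)"
      by (rule sum.swap)
    also have "\<dots> = (\<Sum>s<n. (\<Sum>r<n. P r t * P r s) * Q s c)"
      by (simp add: sum_distrib_right)
    finally show ?thesis .
  qed
  also have "\<dots> = (\<Sum>s<n. (if s = t then 1 else 0) * Q s c)"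
    using assms(1,3) by (intro sum.cong) (auto simp: perm_orth)
  also have "\<dots> = (\<Sum>s<n. if s = t then Q s c else 0)"
    by (intro sum.cong) auto
  also have "\<dots> = Q t c" using assms(3) by simp
  finally show ?thesis using 1 by simp
qed

lemma tsum_conj:
  assumes "N > 0" "is_perm_tensor N L Pt"
    and "\<forall>i<N. \<forall>a<L. \<forall>j<N. \<forall>b<L. einstein N L Pt Qt i a j b = id4 i a j b"
  shows "tsum4 N L (einstein N L (einstein N L Pt B) Qt) = tsum4 N L B"
proof -
  define n where "n = N * L"
  define P where "P = mat4 N L Pt"
  define Q where "Q = mat4 N L Qt"
  define Bm where "Bm = mat4 N L B"
  have pm: "is_perm_matrix n P" using assms(2) unfolding is_perm_tensor_def n_def P_def .
  have PQ: "(\<Sum>s<n. P r s * Q s c) = (if r = c then 1 else 0)" if "r < n" "c < n" for r c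
  proof -
    have "r mod N < N" "c mod N < N" using assms(1) by auto
    moreover have "r div N < L" "c div N < L" using that unfolding n_def
      by (auto simp: less_mult_imp_div_less mult.commute)
    ultimately have "einstein N L Pt Qt (r mod N) (r div N) (c mod N) (c div N)
       = id4 (r mod N) (r div N) (c mod N) (c div N)" using assms(3) by blast
    moreover have "(r mod N = c mod N \<and> r div N = c div N) = (r = c)"
      by (metis div_mult_mod_eq)
    ultimately show ?thesis
      using einstein_mat[OF assms(1), of L Pt Qt r c]
      unfolding P_def Q_def n_def by (simp add: mat4_def id4_def)
  qed
  have Qrow: "(\<Sum>c<n. Q t c) = 1" if "t < n" for t
    using perm_inv_transpose[OF pm PQ that] perm_colsum[OF pm that]
    by (simp add: sum.cong[OF refl, of "{..<n}" "Q t" "\<lambda>c. P c t"])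
  have "tsum4 N L (einstein N L (einstein N L Pt B) Qt)
      = (\<Sum>r<n. \<Sum>c<n. \<Sum>t<n. (\<Sum>s<n. P r s * Bm s t) * Q t c)"
    unfolding tsum4_mat[OF assms(1)] einstein_mat[OF assms(1)] n_def P_def Q_def Bm_def ..
  also have "\<dots> = (\<Sum>s<n. \<Sum>t<n. Bm s t * ((\<Sum>r<n. P r s) * (\<Sum>c<n. Q t c)))"
  proof -
    define f where "f r c t s = P r s * Bm s t * Q t c" for r c t s
    have "(\<Sum>r<n. \<Sum>c<n. \<Sum>t<n. (\<Sum>s<n. P r s * Bm s t) * Q t c)
        = (\<Sum>r<n. \<Sum>c<n. \<Sum>t<n. \<Sum>s<n. f r c t s)"
      by (simp add: f_def sum_distrib_right)
    also have "\<dots> = (\<Sum>r<n. \<Sum>t<n. \<Sum>c<n. \<Sum>s<n. f r c t s)"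
      by (rule sum.cong[OF refl], rule sum.swap)
    also have "\<dots> = (\<Sum>r<n. \<Sum>t<n. \<Sum>s<n. \<Sum>c<n. f r c t s)"
      by (rule sum.cong[OF refl], rule sum.cong[OF refl], rule sum.swap)
    also have "\<dots> = (\<Sum>r<n. \<Sum>s<n. \<Sum>t<n. \<Sum>c<n. f r c t s)"
      by (rule sum.cong[OF refl], rule sum.swap)
    also have "\<dots> = (\<Sum>s<n. \<Sum>r<n. \<Sum>t<n. \<Sum>c<n. f r c t s)"
      by (rule sum.swap)
    also have "\<dots> = (\<Sum>s<n. \<Sum>t<n. \<Sum>r<n. \<Sum>c<n. f r c t s)"
      by (rule sum.cong[OF refl], rule sum.swap)
    also have "\<dots> = (\<Sum>s<n. \<Sum>t<n. Bm s t * ((\<Sum>r<n. P r s) * (\<Sum>c<n. Q t c)))"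
      by (simp add: f_def sum_distrib_left sum_distrib_right mult_ac)
    finally show ?thesis .
  qed
  also have "\<dots> = (\<Sum>s<n. \<Sum>t<n. Bm s t)"
    using perm_colsum[OF pm] Qrow by simp
  also have "\<dots> = tsum4 N L B"
    unfolding tsum4_mat[OF assms(1)] n_def Bm_def ..
  finally show ?thesis .
qed



lemma (in prob_space) bern_expect:
  assumes "Bn \<in> measurable M (count_space UNIV)"
    "distr M (count_space UNIV) Bn = measure_pmf (bernoulli_pmf v)" "0 \<le> v" "v \<le> 1"
  shows "expectation (\<lambda>w. of_bool (Bn w) :: real) = v"
proof -
  have A: "{w \<in> space M. Bn w} \<in> sets M"
    using measurable_sets[OF assms(1), of "{True}"] by (simp add: vimage_def Int_def conj_commute)
  have "expectation (\<lambda>w. of_bool (Bn w) :: real) = expectation (indicator {w \<in> space M. Bn w})"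
    by (rule Bochner_Integration.integral_cong) (auto simp: indicator_def)
  also have "\<dots> = prob {w \<in> space M. Bn w}"
    using A by simp
  also have "\<dots> = measure (distr M (count_space UNIV) Bn) {True}"
    using assms(1) by (subst measure_distr) (auto simp: vimage_def Int_def conj_commute)
  also have "\<dots> = v" using assms(2-4) by (simp add: measure_pmf_single)
  finally show ?thesis .
qed

lemma (in prob_space) hoeff_K:
  fixes Bn :: "'i \<Rightarrow> 'a \<Rightarrow> bool" and I :: "'i set" and v :: "'i \<Rightarrow> real" and e :: real
  assumes fin: "finite I" and ne: "I \<noteq> {}" and ind: "indep_vars (\<lambda>_. count_space UNIV) Bn I"
    and d: "\<And>x. x\<in>I \<Longrightarrow> distr M (count_space UNIV) (Bn x) = measure_pmf (bernoulli_pmf (v x))"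
    and v: "\<And>x. x\<in>I \<Longrightarrow> 0 \<le> v x \<and> v x \<le> 1" and e: "e \<ge> 0"
  shows "prob {w\<in>space M. \<bar>(\<Sum>x\<in>I. of_bool (Bn x w)) - (\<Sum>x\<in>I. v x)\<bar> \<ge> e * card I}
           \<le> 2 * exp (-2 * e^2 * card I)"
proof -
  have meas: "Bn x \<in> measurable M (count_space UNIV)" if "x \<in> I" for x
    using ind that unfolding indep_vars_def by auto
  have ind2: "indep_vars (\<lambda>_. borel) (\<lambda>x w. of_bool (Bn x w) :: real) I"
    by (rule indep_vars_compose2[OF ind]) simp
  interpret H: Hoeffding_ineq M I "\<lambda>x w. of_bool (Bn x w) :: real" "\<lambda>_. 0" "\<lambda>_. 1"
      "\<Sum>x\<in>I. expectation (\<lambda>w. of_bool (Bn x w) :: real)"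
    by unfold_locales (auto simp: fin ind2)
  have mu: "(\<Sum>x\<in>I. expectation (\<lambda>w. of_bool (Bn x w) :: real)) = (\<Sum>x\<in>I. v x)"
    using bern_expect[OF meas d] v by (intro sum.cong) auto
  have cpos: "card I > 0" using fin ne by (simp add: card_gt_0_iff)
  have "prob {w\<in>space M. \<bar>(\<Sum>x\<in>I. of_bool (Bn x w)) - (\<Sum>x\<in>I. v x)\<bar> \<ge> e * card I}
     \<le> 2 * exp (-2 * (e * card I)^2 / (\<Sum>x\<in>I. (1 - 0)\<^sup>2))"
    using H.Hoeffding_ineq_abs_ge[of "e * card I"] e cpos mu by simp
  also have "-2 * (e * card I)^2 / (\<Sum>x\<in>I. (1 - 0)\<^sup>2) = -2 * e^2 * card I"
    using cpos by (simp add: power2_eq_square)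
  finally show ?thesis .
qed

lemma (in prob_space) S_meas:
  assumes "indep_vars (\<lambda>_. count_space UNIV) Bn I"
  shows "(\<lambda>w. \<Sum>x\<in>I. of_bool (Bn x w) :: real) \<in> borel_measurable M"
proof (rule borel_measurable_sum)
  fix x assume "x \<in> I"
  then have "Bn x \<in> measurable M (count_space UNIV)"
    using assms unfolding indep_vars_def by auto
  then show "(\<lambda>w. of_bool (Bn x w) :: real) \<in> borel_measurable M"
    by (rule measurable_compose) simp
qed

lemma kron_bound:
  assumes m: "m > 0" and l: "l > 0"
    and P: "\<And>i a j b. i<m \<Longrightarrow> a<l \<Longrightarrow> j<m \<Longrightarrow> b<l \<Longrightarrow>
               0 \<le> P i a j b \<and> P i a j b \<le> 1 \<and> \<bar>P i a j b - c\<bar> \<le> d"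
    and c: "0 \<le> c" "c \<le> 1"
  shows "i < m^k \<Longrightarrow> a < l^k \<Longrightarrow> j < m^k \<Longrightarrow> b < l^k \<Longrightarrow>
    0 \<le> kron_pow m l P k i a j b \<and> kron_pow m l P k i a j b \<le> 1 \<and>
    \<bar>kron_pow m l P k i a j b - c^k\<bar> \<le> k * d"
proof (induction k arbitrary: i a j b)
  case 0
  then show ?case by (simp add: ones4_def)
next
  case (Suc k)
  have dv: "i div m < m^k" "a div l < l^k" "j div m < m^k" "b div l < l^k"
    using Suc.prems by (metis less_mult_imp_div_less mult.commute power_Suc)+
  have md: "i mod m < m" "a mod l < l" "j mod m < m" "b mod l < l" using m l by auto
  define A where "A = kron_pow m l P k (i div m) (a div l) (j div m) (b div l)"
  define Q where "Q = P (i mod m) (a mod l) (j mod m) (b mod l)"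
  have IH: "0 \<le> A" "A \<le> 1" "\<bar>A - c^k\<bar> \<le> k * d" using Suc.IH[OF dv] unfolding A_def by auto
  have PQ: "0 \<le> Q" "Q \<le> 1" "\<bar>Q - c\<bar> \<le> d" using P[OF md] unfolding Q_def by auto
  have e: "kron_pow m l P (Suc k) i a j b = A * Q"
    by (simp add: kron4_def A_def Q_def)
  have ck: "0 \<le> c^k" "c^k \<le> 1" using c by (auto simp: power_le_one)
  have "A * Q - c^Suc k = (A - c^k) * Q + c^k * (Q - c)" by (simp add: algebra_simps)
  then have "\<bar>A * Q - c^Suc k\<bar> \<le> \<bar>A - c^k\<bar> * \<bar>Q\<bar> + c^k * \<bar>Q - c\<bar>"
    using ck by (metis abs_mult abs_of_nonneg abs_triangle_ineq)
  also have "\<dots> \<le> k * d * 1 + 1 * d"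
    using IH PQ ck by (intro add_mono mult_mono) auto
  finally have "\<bar>A * Q - c^Suc k\<bar> \<le> Suc k * d" by (simp add: algebra_simps)
  moreover have "0 \<le> A * Q" "A * Q \<le> 1" using IH PQ by (auto simp: mult_le_one)
  ultimately show ?case using e by simp
qed

lemma tsum4_prod:
  "tsum4 N L T = (\<Sum>(i,a,j,b)\<in>{..<N}\<times>{..<L}\<times>{..<N}\<times>{..<L}. T i a j b)"
  unfolding tsum4_def by (simp add: sum.cartesian_product)

lemma lim_aux:
  assumes "s > 1"
  shows "(\<lambda>K. real K * C / s ^ K) \<longlonglongrightarrow> 0"
proof -
  have "(\<lambda>K. of_nat K * (1/s) ^ K) \<longlonglongrightarrow> (0::real)"
    by (rule powser_times_n_limit_0) (use assms in simp)
  then have "(\<lambda>K. C * (of_nat K * (1/s) ^ K)) \<longlonglongrightarrow> C * 0"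
    by (intro tendsto_intros)
  then show ?thesis by (simp add: power_one_over field_simps)
qed



theorem lemma1:
  fixes M :: "'w measure"
    and m l :: nat
    and p :: "nat \<Rightarrow> real"
    and X :: "nat \<Rightarrow> tensor4"
    and q :: real
    and Bern :: "nat \<Rightarrow> nat \<times> nat \<times> nat \<times> nat \<Rightarrow> 'w \<Rightarrow> bool"
    and perm perm_inv :: "nat \<Rightarrow> tensor4"
  assumes "prob_space M"
    and "m \<ge> 1" and "l \<ge> 1" and "m * l \<ge> 2"
    and "\<And>K. 0 < p K \<and> p K < 1"
    and "\<exists>C. \<forall>K i a j b. i < m \<longrightarrow> a < l \<longrightarrow> j < m \<longrightarrow> b < l \<longrightarrow> \<bar>X K i a j b\<bar> \<le> C"
    and "\<And>K i a j b. i < m \<Longrightarrow> a < l \<Longrightarrow> j < m \<Longrightarrow> b < l \<Longrightarrow>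
           0 \<le> p K + X K i a j b / sqrt (real ((m * l) ^ K)) \<and>
           p K + X K i a j b / sqrt (real ((m * l) ^ K)) \<le> 1"
    and "(\<lambda>K. p K ^ K) \<longlonglongrightarrow> q" and "0 < q" and "q < 1"
    and "\<And>K. prob_space.indep_vars M (\<lambda>_. count_space UNIV) (Bern K)
               ({..<m ^ K} \<times> {..<l ^ K} \<times> {..<m ^ K} \<times> {..<l ^ K})"
    and "\<And>K i a j b. i < m ^ K \<Longrightarrow> a < l ^ K \<Longrightarrow> j < m ^ K \<Longrightarrow> b < l ^ K \<Longrightarrow>
           distr M (count_space UNIV) (Bern K (i, a, j, b)) =
           measure_pmf (bernoulli_pmf (kron_pow m l
              (\<lambda>i a j b. p K + X K i a j b / sqrt (real ((m * l) ^ K))) K i a j b))"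
    and "\<And>K. is_perm_tensor (m ^ K) (l ^ K) (perm K)"
    and "\<And>K. \<forall>i<m ^ K. \<forall>a<l ^ K. \<forall>j<m ^ K. \<forall>b<l ^ K.
           einstein (m ^ K) (l ^ K) (perm K) (perm_inv K) i a j b = id4 i a j b"
  shows "AE w in M.
           (\<lambda>K. tsum4 (m ^ K) (l ^ K)
                   (einstein (m ^ K) (l ^ K)
                      (einstein (m ^ K) (l ^ K) (perm K)
                         (\<lambda>i a j b. of_bool (Bern K (i, a, j, b) w)))
                      (perm_inv K)) / (real ((m * l) ^ K))\<^sup>2
                 - p K ^ K) \<longlonglongrightarrow> 0"
proof -
  interpret ps: prob_space M by (rule assms(1))
  obtain C where C: "\<And>K i a j b. i < m \<Longrightarrow> a < l \<Longrightarrow> j < m \<Longrightarrow> b < l \<Longrightarrow> \<bar>X K i a j b\<bar> \<le> C"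
    using assms(6) by blast
  have C0: "0 \<le> C" using C[of 0 0 0 0 0] assms(2,3) by linarith
  define nn where "nn K = real ((m*l)^K)" for K
  define P1 where "P1 K = (\<lambda>i a j b. p K + X K i a j b / sqrt (nn K))" for K
  define PK where "PK K = kron_pow m l (P1 K) K" for K
  define I where "I K = {..<m^K}\<times>{..<l^K}\<times>{..<m^K}\<times>{..<l^K}" for K
  define v where "v K = (\<lambda>(i,a,j,b). PK K i a j b)" for K
  define S where "S K w = (\<Sum>x\<in>I K. of_bool (Bern K x w) :: real)" for K w
  define mu where "mu K = (\<Sum>x\<in>I K. v K x)" for K
  define d where "d K = C / sqrt (nn K)" for K
  define cI where "cI K = real (card (I K))" for K
  have mpos: "m > 0" "l > 0" using assms(2,3) by auto
  have nnpos: "nn K > 0" for K using mpos by (simp add: nn_def)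
  have cI: "cI K = (nn K)^2" for K
    by (simp add: cI_def I_def nn_def card_cartesian_product power_mult_distrib power2_eq_square)
  have fin: "finite (I K)" for K by (simp add: I_def)
  have ne: "I K \<noteq> {}" for K using mpos by (simp add: I_def lessThan_empty_iff)
  have cIpos: "cI K > 0" for K using cI[of K] nnpos[of K] by simp
  have vb: "0 \<le> v K x \<and> v K x \<le> 1 \<and> \<bar>v K x - p K ^ K\<bar> \<le> K * d K" if xI: "x \<in> I K" for K x
  proof -
    obtain i a j b where x: "x = (i,a,j,b)" "i < m^K" "a < l^K" "j < m^K" "b < l^K"
      using xI unfolding I_def by (cases x) auto
    have P: "0 \<le> P1 K i a j b \<and> P1 K i a j b \<le> 1 \<and> \<bar>P1 K i a j b - p K\<bar> \<le> d K"
      if "i<m" "a<l" "j<m" "b<l" for i a j b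
    proof -
      have "\<bar>X K i a j b / sqrt (nn K)\<bar> \<le> C / sqrt (nn K)"
        using C[OF that] nnpos[of K] by (simp add: abs_div divide_right_mono)
      then show ?thesis using assms(7)[OF that, of K] unfolding P1_def d_def nn_def by simp
    qed
    have "0 \<le> p K" "p K \<le> 1" using assms(5)[of K] by auto
    from kron_bound[OF mpos P this x(2-5)] show ?thesis
      unfolding v_def PK_def x(1) by simp
  qed
  have vb2: "0 \<le> v K x \<and> v K x \<le> 1" if "x \<in> I K" for K x
    using vb[OF that] by blast
  have teq: "tsum4 (m ^ K) (l ^ K)
                   (einstein (m ^ K) (l ^ K)
                      (einstein (m ^ K) (l ^ K) (perm K)
                         (\<lambda>i a j b. of_bool (Bern K (i, a, j, b) w)))
                      (perm_inv K)) / (real ((m * l) ^ K))\<^sup>2 = S K w / cI K" for K w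
  proof -
    have "tsum4 (m ^ K) (l ^ K)
                   (einstein (m ^ K) (l ^ K)
                      (einstein (m ^ K) (l ^ K) (perm K)
                         (\<lambda>i a j b. of_bool (Bern K (i, a, j, b) w)))
                      (perm_inv K)) = tsum4 (m ^ K) (l ^ K) (\<lambda>i a j b. of_bool (Bern K (i, a, j, b) w))"
      using mpos by (intro tsum_conj assms(13) assms(14)) simp
    also have "\<dots> = S K w" by (simp add: tsum4_prod S_def I_def)
    finally show ?thesis using cI[of K] by (simp add: nn_def)
  qed
  have hoeff: "ps.prob {w\<in>space M. \<bar>S K w - mu K\<bar> \<ge> e * cI K} \<le> 2 * exp (-2 * e^2 * cI K)"
    if "e \<ge> 0" for K e
  proof -
    have d: "distr M (count_space UNIV) (Bern K x) = measure_pmf (bernoulli_pmf (v K x))"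
      if xI: "x \<in> I K" for x
    proof -
      obtain i a j b where x: "x = (i,a,j,b)" "i < m^K" "a < l^K" "j < m^K" "b < l^K"
        using xI unfolding I_def by (cases x) auto
      show ?thesis using assms(12)[OF x(2-5)] unfolding x(1) v_def PK_def P1_def nn_def by simp
    qed
    show ?thesis
      using ps.hoeff_K[OF fin ne assms(11)[of K, folded I_def] d vb2 that]
      unfolding S_def mu_def cI_def by simp
  qed
  define A where "A r K = {w\<in>space M. \<bar>S K w - mu K\<bar> \<ge> (1 / real (Suc r)) * cI K}" for r K
  have Smeas[measurable]: "S K \<in> borel_measurable M" for K
    unfolding S_def[abs_def] using ps.S_meas[OF assms(11)[of K]] unfolding I_def by simp
  have BC: "AE w in M. eventually (\<lambda>K. w \<in> space M - A r K) sequentially" for r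
  proof (rule borel_cantelli_AE1)
    show "A r K \<in> sets M" for K unfolding A_def by measurable
    show "emeasure M (A r K) < \<infinity>" for K by (simp add: ps.emeasure_eq_measure)
    define e where "e = 1 / real (Suc r)"
    have e0: "e \<ge> 0" by (simp add: e_def)
    define q0 where "q0 = exp (-2 * e^2)"
    have q0: "norm q0 < 1" by (simp add: q0_def e_def)
    show "summable (\<lambda>K. measure M (A r K))"
    proof (rule summable_comparison_test')
      show "summable (\<lambda>K. 2 * q0 ^ K)" by (intro summable_mult summable_geometric q0)
      fix K :: nat
      have "real K \<le> nn K" unfolding nn_def
      proof -
        have "K < 2^K" by simp
        also have "2^K \<le> (m*l)^K" using assms(4) by (intro power_mono) auto
        finally have "K < (m*l)^K" .
        then show "real K \<le> real ((m*l)^K)" by (metis less_imp_le of_nat_le_iff)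
      qed
      also have "nn K \<le> cI K"
      proof -
        have "(0::nat) < (m*l)^K" using mpos by simp
        then have one: "1 \<le> nn K" unfolding nn_def by linarith
        have "nn K * 1 \<le> nn K * nn K" using one by (intro mult_left_mono) auto
        then show ?thesis unfolding cI by (simp add: power2_eq_square)
      qed
      finally have KI: "real K \<le> cI K" .
      have "norm (measure M (A r K)) = ps.prob (A r K)" by simp
      also have "\<dots> \<le> 2 * exp (-2 * e^2 * cI K)"
        using hoeff[OF e0, of K] unfolding A_def e_def by simp
      also have "\<dots> \<le> 2 * exp (-2 * e^2 * real K)"
        using KI by (simp add: mult_left_mono)
      also have "\<dots> = 2 * q0 ^ K"
        unfolding q0_def by (simp add: exp_of_nat_mult[symmetric] mult_ac)
      finally show "norm (measure M (A r K)) \<le> 2 * q0 ^ K" .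
    qed
  qed
  have t2: "(\<lambda>K. mu K / cI K - p K ^ K) \<longlonglongrightarrow> 0"
  proof (rule Lim_null_comparison)
    show "\<forall>\<^sub>F K in sequentially. norm (mu K / cI K - p K ^ K) \<le> real K * C / sqrt (real (m*l)) ^ K"
    proof (rule always_eventually, rule allI)
      fix K
      have "mu K / cI K - p K ^ K = (\<Sum>x\<in>I K. v K x - p K ^ K) / cI K"
        using cIpos[of K] by (simp add: mu_def sum_subtractf cI_def field_simps)
      also have "\<bar>\<dots>\<bar> = \<bar>\<Sum>x\<in>I K. v K x - p K ^ K\<bar> / cI K" using cIpos[of K] by simp
      also have "\<dots> \<le> (\<Sum>x\<in>I K. real K * d K) / cI K"
        using cIpos[of K] vb
        by (intro divide_right_mono order_trans[OF sum_abs sum_mono]) auto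
      also have "\<dots> = real K * d K" using cIpos[of K] by (simp add: cI_def)
      also have "\<dots> = real K * C / sqrt (real (m*l)) ^ K"
        by (simp add: d_def nn_def real_sqrt_power[symmetric])
      finally show "norm (mu K / cI K - p K ^ K) \<le> real K * C / sqrt (real (m*l)) ^ K" by simp
    qed
    show "(\<lambda>K. real K * C / sqrt (real (m*l)) ^ K) \<longlonglongrightarrow> 0"
    proof (rule lim_aux)
      have "(2::real) \<le> real m * real l" using assms(4) by (metis of_nat_le_iff of_nat_mult of_nat_numeral)
      then show "1 < sqrt (real (m*l))" by simp
    qed
  qed
  have "AE w in M. \<forall>r. eventually (\<lambda>K. w \<in> space M - A r K) sequentially"
    using BC by (simp add: AE_all_countable)
  then show ?thesis
  proof (rule AE_mp[OF _ AE_I2[OF impI]])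
    fix w assume w: "w \<in> space M" and H: "\<forall>r. eventually (\<lambda>K. w \<in> space M - A r K) sequentially"
    have t1: "(\<lambda>K. (S K w - mu K) / cI K) \<longlonglongrightarrow> 0"
      unfolding tendsto_iff
    proof (intro allI impI)
      fix \<epsilon> :: real assume "\<epsilon> > 0"
      then obtain r where r: "inverse (real (Suc r)) < \<epsilon>" using reals_Archimedean by blast
      show "\<forall>\<^sub>F K in sequentially. dist ((S K w - mu K) / cI K) 0 < \<epsilon>"
        using H[rule_format, of r]
      proof (rule eventually_mono)
        fix K assume "w \<in> space M - A r K"
        then have "\<bar>S K w - mu K\<bar> < (1 / real (Suc r)) * cI K" using w unfolding A_def by auto
        then have "\<bar>S K w - mu K\<bar> / cI K < 1 / real (Suc r)"
          using cIpos[of K] by (simp add: divide_less_eq)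
        then show "dist ((S K w - mu K) / cI K) 0 < \<epsilon>"
          using r cIpos[of K] by (simp add: inverse_eq_divide)
      qed
    qed
    have "(\<lambda>K. (S K w - mu K) / cI K + (mu K / cI K - p K ^ K)) \<longlonglongrightarrow> 0 + 0"
      by (rule tendsto_add[OF t1 t2])
    moreover have "(S K w - mu K) / cI K + (mu K / cI K - p K ^ K) = S K w / cI K - p K ^ K" for K
      using cIpos[of K] by (simp add: field_simps)
    ultimately show "(\<lambda>K. tsum4 (m ^ K) (l ^ K)
                   (einstein (m ^ K) (l ^ K)
                      (einstein (m ^ K) (l ^ K) (perm K)
                         (\<lambda>i a j b. of_bool (Bern K (i, a, j, b) w)))
                      (perm_inv K)) / (real ((m * l) ^ K))\<^sup>2
                 - p K ^ K) \<longlonglongrightarrow> 0"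
      unfolding teq by simp
  qed
qed

end
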